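(* Let $b$ be a prime, $k\in\mathbb{N}$, and $c:=\mu_1(k)$. Then for every $L\in\mathcal{L}_{\infty,\infty}$, the integer $\ell\in\mathbb{N}$ with $\vec{\ell}=L^\top\vec{k}$ satisfies $\mu_1(\ell)=c$. Moreover, for every $k'\in\mathbb{N}$ with $\mu_1(k')=c$ and every integer $n\ge c$, \[\Pr\left[L^\top\vec{k}=\vec{k}'\;\middle|\;L\in\mathcal{L}_{\infty,n}\right]=\frac{1}{(b-1)b^{c-1}},\] where $L$ is drawn at random from $\mathcal{L}_{\infty,n}$ and $\vec k'$ is identified with its first $n$ digits.
   Context: $\mathbb{F}_b=\{0,\dots,b-1\}$ is the field with $b$ elements. For $k\in\mathbb{N}_0$ with $b$-adic expansion $k=\kappa_0+\kappa_1b+\cdots$, write $\vec{k}=(\kappa_0,\kappa_1,\ldots)^\top\in\mathbb{F}_b^{\mathbb{N}}$. NRT weight: for $k\in\mathbb{N}$ written as $k=\kappa_1b^{c_1-1}+\cdots+\kappa_vb^{c_v-1}$ with $\kappa_i\in\{1,\dots,b-1\}$ and $c_1>\cdots>c_v>0$, $\mu_1(k)=c_1$; $\mu_1(0)=0$. For $w,n\in\mathbb{N}\cup\{\infty\}$, $\mathcal{L}_{w,n}$ is the set of matrices $L=(\ell_{i,j})\in\mathbb{F}_b^{w\times n}$ with $\ell_{i,j}=0$ if $i<j$ and $\ell_{i,j}\neq0$ if $i=j$. A random element of $\mathcal{L}_{w,n}$ is obtained by choosing each entry independently: diagonal entries uniformly from $\mathbb{F}_b\setminus\{0\}$, entries with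 $i>j$ uniformly from $\mathbb{F}_b$, entries with $i<j$ equal to $0$. For $L\in\mathcal{L}_{\infty,n}$, $L^\top\vec k\in\mathbb{F}_b^n$ is the matrix-vector product over $\mathbb{F}_b$ (a finite sum since $\vec k$ has finitely many nonzero entries). *)

theory Defs
  imports "HOL-Probability.Probability"
begin

text \<open>F_b is represented by {0..<b} :: nat set with arithmetic modulo b.\<close>

definition digit :: "nat \<Rightarrow> nat \<Rightarrow> nat \<Rightarrow> nat" where
  "digit b k i = k div b ^ i mod b"

definition mu1 :: "nat \<Rightarrow> nat \<Rightarrow> nat" where
  "mu1 b k = (if k = 0 then 0 else Suc (GREATEST i. digit b k i \<noteq> 0))"

text \<open>Matrices L = (l_{i,j}) are functions on index pairs (i,j), 0-based.
  Membership in L_{infinity,infinity}.\<close>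
definition L_inf_inf :: "nat \<Rightarrow> (nat \<times> nat \<Rightarrow> nat) set" where
  "L_inf_inf b = {L. (\<forall>i j. L (i,j) < b) \<and> (\<forall>i j. i < j \<longrightarrow> L (i,j) = 0)
                     \<and> (\<forall>i. L (i,i) \<noteq> 0)}"

definition LTk :: "nat \<Rightarrow> (nat \<times> nat \<Rightarrow> nat) \<Rightarrow> nat \<Rightarrow> nat \<Rightarrow> nat" where
  "LTk b L k j = (\<Sum>i\<in>{i. digit b k i \<noteq> 0}. L (i,j) * digit b k i) mod b"

definition entry_pmf :: "nat \<Rightarrow> nat \<Rightarrow> nat \<Rightarrow> nat pmf" where
  "entry_pmf b i j = (if i < j then return_pmf 0
                      else if i = j then pmf_of_set {1..<b} else pmf_of_set {..<b})"

text \<open>Random element of L_{infinity,n}: independent entries, rows indexed by all of nat,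
  columns by {..<n}.\<close>
definition random_L :: "nat \<Rightarrow> nat \<Rightarrow> (nat \<times> nat \<Rightarrow> nat) measure" where
  "random_L b n = (\<Pi>\<^sub>M ij\<in>(UNIV :: nat set) \<times> {..<n}. measure_pmf (entry_pmf b (fst ij) (snd ij)))"

end

theory Submission
  imports Defs "HOL-Number_Theory.Cong"
begin

lemma distr_Pi_pmf_PiM:
  fixes p :: "'i \<Rightarrow> 'a pmf"
  assumes fin: "finite J"
  shows "distr (measure_pmf (Pi_pmf J d p)) (Pi\<^sub>M J (\<lambda>i. measure_pmf (p i))) (\<lambda>x. restrict x J)
       = Pi\<^sub>M J (\<lambda>i. measure_pmf (p i))"
proof (rule product_sigma_finite.PiM_eqI)
  interpret product_prob_space "\<lambda>i. measure_pmf (p i)"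
    by (intro product_prob_spaceI measure_pmf.prob_space_axioms)
  show "product_sigma_finite (\<lambda>i. measure_pmf (p i))" by unfold_locales
next
  fix A assume A: "\<And>i. i \<in> J \<Longrightarrow> A i \<in> sets (measure_pmf (p i))"
  have "Pi\<^sub>E J A \<in> sets (Pi\<^sub>M J (\<lambda>i. measure_pmf (p i)))"
    using A by (intro sets_PiM_I_finite fin) auto
  hence "emeasure (distr (measure_pmf (Pi_pmf J d p)) (Pi\<^sub>M J (\<lambda>i. measure_pmf (p i)))
            (\<lambda>x. restrict x J)) (Pi\<^sub>E J A) =
         emeasure (measure_pmf (Pi_pmf J d p)) ((\<lambda>x. restrict x J) -` Pi\<^sub>E J A)"
    by (subst emeasure_distr) (auto simp: space_PiM)
  also have "\<dots> = emeasure (measure_pmf (Pi_pmf J d p)) (PiE_dflt J d A)"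
    by (intro emeasure_eq_AE AE_pmfI) (auto simp: PiE_dflt_def set_Pi_pmf fin)
  also have "\<dots> = (\<Prod>i\<in>J. emeasure (measure_pmf (p i)) (A i))"
    by (simp add: measure_pmf.emeasure_eq_measure measure_Pi_pmf_PiE_dflt fin prod_ennreal)
  finally show "emeasure (distr (measure_pmf (Pi_pmf J d p)) (Pi\<^sub>M J (\<lambda>i. measure_pmf (p i)))
            (\<lambda>x. restrict x J)) (Pi\<^sub>E J A) = (\<Prod>i\<in>J. emeasure (measure_pmf (p i)) (A i))" .
qed (use fin in auto)

lemma digit_0: "digit b x 0 = x mod b" by (simp add: digit_def)
lemma digit_Suc: "digit b x (Suc i) = digit b (x div b) i"
  by (simp add: digit_def div_mult2_eq mult.commute)

lemma digit_sum:
  assumes "\<And>j. ds j < b"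
  shows "digit b (\<Sum>j<m. ds j * b ^ j) i = (if i < m then ds i else 0)"
  using assms
proof (induction m arbitrary: ds i)
  case 0 then show ?case by (simp add: digit_def)
next
  case (Suc m)
  have b: "b > 0" using Suc.prems[of 0] by simp
  have eq: "(\<Sum>j<Suc m. ds j * b ^ j) = ds 0 + b * (\<Sum>j<m. ds (Suc j) * b ^ j)"
    by (subst sum.lessThan_Suc_shift) (simp add: sum_distrib_left algebra_simps)
  show ?case
  proof (cases i)
    case 0 then show ?thesis using Suc.prems[of 0] unfolding eq by (simp add: digit_def)
  next
    case (Suc i')
    have "(ds 0 + b * (\<Sum>j<m. ds (Suc j) * b ^ j)) div b = (\<Sum>j<m. ds (Suc j) * b ^ j)"
      using Suc.prems[of 0] b by simp
    then have "digit b (ds 0 + b * (\<Sum>j<m. ds (Suc j) * b ^ j)) (Suc i') = digit b (\<Sum>j<m. ds (Suc j) * b ^ j) i'"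
      by (simp only: digit_Suc)
    then show ?thesis using Suc.IH[of "\<lambda>j. ds (Suc j)" i'] Suc.prems Suc
      unfolding eq by simp
  qed
qed

lemma digit_ex: assumes "b \<ge> 2" "k \<ge> 1" shows "\<exists>i. digit b k i \<noteq> 0"
  using assms(2)
proof (induction k rule: less_induct)
  case (less k)
  show ?case
  proof (cases "k mod b = 0")
    case False then show ?thesis by (metis digit_0)
  next
    case True
    then have "k div b \<ge> 1" "k div b < k" using less.prems assms(1)
      by (auto simp: dvd_imp_le mod_0_imp_dvd div_greater_zero_iff)
    then obtain i where "digit b (k div b) i \<noteq> 0" using less.IH by blast
    then show ?thesis by (metis digit_Suc)
  qed
qed

lemma digit_bound: assumes "b \<ge> 2" "digit b k i \<noteq> 0" shows "i < k"
proof -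
  have "k div b ^ i \<noteq> 0" using assms(2) unfolding digit_def by (metis mod_0)
  then have "b ^ i \<le> k" by (simp add: div_eq_0_iff) 
  moreover have "i < 2 ^ i" by (rule less_exp)
  moreover have "2 ^ i \<le> b ^ i" using assms(1) by (simp add: power_mono)
  ultimately show ?thesis by linarith
qed

lemma mu1_props:
  assumes "b \<ge> 2" "k \<ge> 1"
  shows "mu1 b k \<ge> 1" "digit b k (mu1 b k - 1) \<noteq> 0" "\<And>i. i \<ge> mu1 b k \<Longrightarrow> digit b k i = 0"
proof -
  define g where "g = (GREATEST i. digit b k i \<noteq> 0)"
  obtain i0 where i0: "digit b k i0 \<noteq> 0" using digit_ex[OF assms] by blast
  have bd: "\<And>y. digit b k y \<noteq> 0 \<Longrightarrow> y \<le> k" using digit_bound[OF assms(1)] by (meson less_imp_le)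
  have g1: "digit b k g \<noteq> 0" unfolding g_def
    by (rule GreatestI_nat[of "\<lambda>i. digit b k i \<noteq> 0" i0 k]) (use bd i0 in blast)+
  have g2: "\<And>i. digit b k i \<noteq> 0 \<Longrightarrow> i \<le> g" unfolding g_def
    by (rule Greatest_le_nat[of "\<lambda>i. digit b k i \<noteq> 0" _ k]) (use bd in blast)+
  have m: "mu1 b k = Suc g" using assms by (simp add: mu1_def g_def)
  show "mu1 b k \<ge> 1" using m by simp
  show "digit b k (mu1 b k - 1) \<noteq> 0" using m g1 by simp
  fix i assume "i \<ge> mu1 b k"
  then show "digit b k i = 0" using m g2 by (metis not_less_eq_eq)
qed

lemma mu1_char:
  assumes "b \<ge> 2" "c \<ge> 1" "digit b l (c - 1) \<noteq> 0" "\<And>i. i \<ge> c \<Longrightarrow> digit b l i = 0"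
  shows "mu1 b l = c"
proof -
  have l: "l \<noteq> 0"
  proof
    assume "l = 0" then have "digit b l (c - 1) = 0" unfolding digit_def by simp
    then show False using assms(3) by (rule notE[rotated])
  qed
  have G: "(GREATEST i. digit b l i \<noteq> 0) = c - 1"
  proof (rule Greatest_equality)
    show "digit b l (c - 1) \<noteq> 0" by (rule assms(3))
    fix y assume "digit b l y \<noteq> 0"
    then have "\<not> y \<ge> c" using assms(4) by metis
    then show "y \<le> c - 1" by linarith
  qed
  have "mu1 b l = Suc (GREATEST i. digit b l i \<noteq> 0)" using l unfolding mu1_def by (rule if_not_P)
  then show ?thesis using G assms(2) by arith
qed


lemma LTk_alt:
  assumes "\<And>i. i \<ge> c \<Longrightarrow> digit b k i = 0" "\<And>i. i < j \<Longrightarrow> i < c \<Longrightarrow> L (i,j) = 0"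
  shows "LTk b L k j = (\<Sum>i\<in>{j..<c}. L (i,j) * digit b k i) mod b"
proof -
  have sub: "{i. digit b k i \<noteq> 0} \<subseteq> {..<c}"
  proof
    fix i assume "i \<in> {i. digit b k i \<noteq> 0}"
    then have "digit b k i \<noteq> 0" by simp
    then have "\<not> i \<ge> c" using assms(1) by metis
    then show "i \<in> {..<c}" by simp
  qed
  have "(\<Sum>i\<in>{i. digit b k i \<noteq> 0}. L (i,j) * digit b k i) = (\<Sum>i\<in>{..<c}. L (i,j) * digit b k i)"
  proof (rule sum.mono_neutral_left)
    show "\<forall>i\<in>{..<c} - {i. digit b k i \<noteq> 0}. L (i,j) * digit b k i = 0"
    proof
      fix i assume "i \<in> {..<c} - {i. digit b k i \<noteq> 0}"
      then have "digit b k i = 0" by blast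
      then show "L (i,j) * digit b k i = 0" by (rule mult_eq_0_iff[THEN iffD2, OF disjI2])
    qed
  qed (rule finite_lessThan, rule sub)
  also have "\<dots> = (\<Sum>i\<in>{j..<c}. L (i,j) * digit b k i)"
  proof (rule sum.mono_neutral_right)
    show "\<forall>i\<in>{..<c} - {j..<c}. L (i,j) * digit b k i = 0"
    proof
      fix i assume "i \<in> {..<c} - {j..<c}"
      then have "i < j" "i < c" by auto
      then show "L (i,j) * digit b k i = 0" using assms(2) by simp
    qed
  qed auto
  finally show ?thesis unfolding LTk_def by simp
qed

lemma card_sol:
  fixes b a r t :: nat
  assumes "prime b" "0 < a" "a < b" "t < b"
  shows "\<exists>y0. y0 < b \<and> {y\<in>{..<b}. (y*a+r) mod b = t} = {y0}"
proof -
  define h where "h y = (y*a+r) mod b" for y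
  have b0: "b > 0" using assms(3) by simp
  have nd: "\<not> b dvd a"
  proof
    assume "b dvd a" then have "b \<le> a" using assms(2) by (rule dvd_imp_le)
    then show False using assms(3) by simp
  qed
  have cop: "coprime a b"
    using prime_imp_coprime[OF assms(1) nd] by (simp add: coprime_commute)
  have inj: "inj_on h {..<b}"
  proof (rule inj_onI)
    fix y1 y2 assume y: "y1 \<in> {..<b}" "y2 \<in> {..<b}" "h y1 = h y2"
    then have "[y1*a + r = y2*a + r] (mod b)" by (simp add: h_def cong_def)
    then have "[y1*a = y2*a] (mod b)" by (simp add: cong_add_rcancel_nat)
    then have "[y1 = y2] (mod b)" using cong_mult_rcancel_nat[OF cop] by simp
    then show "y1 = y2" using y by (simp add: cong_def)
  qed
  have "h ` {..<b} \<subseteq> {..<b}" using b0 by (auto simp: h_def)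
  then have "h ` {..<b} = {..<b}" using endo_inj_surj[OF finite_lessThan _ inj] by simp
  then obtain y0 where y0: "y0 < b" "h y0 = t" using assms(4) by (metis imageE lessThan_iff)
  have "{y\<in>{..<b}. (y*a+r) mod b = t} = {y0}"
    using y0 inj unfolding h_def[symmetric] by (auto simp: inj_on_def)
  then show ?thesis using y0 by auto
qed

definition colC :: "nat \<Rightarrow> (nat \<Rightarrow> nat) \<Rightarrow> (nat \<Rightarrow> nat) \<Rightarrow> nat \<Rightarrow> nat \<Rightarrow> (nat \<times> nat \<Rightarrow> nat) \<Rightarrow> bool" where
  "colC b \<kappa> t c j f = ((\<Sum>i\<in>{j..<c}. f (i,j) * \<kappa> i) mod b = t j)"

definition wt :: "nat \<Rightarrow> nat \<Rightarrow> nat \<Rightarrow> real" where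
  "wt b c j = (if j = c - 1 then 1 / (real b - 1) else 1 / real b)"

definition pp :: "nat \<Rightarrow> nat \<times> nat \<Rightarrow> nat pmf" where
  "pp b = (\<lambda>ij. entry_pmf b (fst ij) (snd ij))"

lemma colC_upd_other:
  assumes "j' \<noteq> j"
  shows "colC b \<kappa> t c j' (f((i0,j) := y)) = colC b \<kappa> t c j' f"
  unfolding colC_def using assms by (intro arg_cong2[where f="(=)"] arg_cong2[where f="(mod)"] sum.cong) auto

lemma one_col:
  assumes "prime b" "j < c" "0 < \<kappa> (c - 1)" "\<kappa> (c - 1) < b" "t j < b" "j = c - 1 \<Longrightarrow> t j \<noteq> 0"
  shows "measure_pmf.prob (pp b (c - 1, j)) {y. colC b \<kappa> t c j (f((c - 1, j) := y))} = wt b c j"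
proof -
  define r where "r = (\<Sum>i\<in>{j..<c-1}. f (i,j) * \<kappa> i)"
  define C where "C = {y. colC b \<kappa> t c j (f((c - 1, j) := y))}"
  have jc: "j \<le> c - 1" using assms(2) by arith
  have sumeq: "(\<Sum>i\<in>{j..<c}. (f((c - 1, j) := y)) (i,j) * \<kappa> i) = y * \<kappa> (c-1) + r" for y
  proof -
    have c: "{j..<c} = {j..<Suc (c - 1)}" using assms(2) by simp
    have "(\<Sum>i\<in>{j..<c}. (f((c - 1, j) := y)) (i,j) * \<kappa> i)
          = (\<Sum>i\<in>{j..<c-1}. (f((c - 1, j) := y)) (i,j) * \<kappa> i) + y * \<kappa> (c-1)"
      unfolding c by (subst sum.atLeastLessThan_Suc[OF jc]) simp
    also have "(\<Sum>i\<in>{j..<c-1}. (f((c - 1, j) := y)) (i,j) * \<kappa> i) = r"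
      unfolding r_def by (rule sum.cong) auto
    finally show ?thesis by simp
  qed
  have Ciff: "y \<in> C \<longleftrightarrow> (y * \<kappa> (c-1) + r) mod b = t j" for y
    unfolding C_def colC_def mem_Collect_eq sumeq ..
  have "\<exists>y0. y0 < b \<and> {y\<in>{..<b}. (y * \<kappa> (c-1) + r) mod b = t j} = {y0}"
    by (rule card_sol[OF assms(1,3,4,5)])
  then obtain y0 where y0c: "y0 < b \<and> {y\<in>{..<b}. (y * \<kappa> (c-1) + r) mod b = t j} = {y0}" ..
  then have y0: "y0 < b" "{y\<in>{..<b}. (y * \<kappa> (c-1) + r) mod b = t j} = {y0}" by simp_all
  have y0iff: "y < b \<and> (y * \<kappa> (c-1) + r) mod b = t j \<longleftrightarrow> y = y0" for y
    using y0(2)[THEN eqset_imp_iff, of y] by simp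
  have b2: "b \<ge> 2" using assms(1) by (rule prime_ge_2_nat)
  show ?thesis
  proof (cases "j = c - 1")
    case False
    moreover have "\<not> (c - 1 < j)" using assms(2) by arith
    ultimately have pe: "pp b (c - 1, j) = pmf_of_set {..<b}" by (simp add: pp_def entry_pmf_def)
    have "{..<b} \<inter> C = {y0}"
    proof (rule set_eqI)
      fix y show "y \<in> {..<b} \<inter> C \<longleftrightarrow> y \<in> {y0}" using y0iff[of y] Ciff[of y] by simp
    qed
    then have "measure_pmf.prob (pmf_of_set {..<b}) C = 1 / real b"
      using b2 by (subst measure_pmf_of_set) (simp_all add: lessThan_empty_iff)
    then show ?thesis unfolding pe C_def[symmetric] using False by (simp add: wt_def)
  next
    case True
    then have pe: "pp b (c - 1, j) = pmf_of_set {1..<b}" by (simp add: pp_def entry_pmf_def)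
    have r0: "r = 0" using True by (simp add: r_def)
    have "y0 \<noteq> 0"
    proof
      assume "y0 = 0"
      then have "(y0 * \<kappa> (c-1) + r) mod b = 0" using r0 by simp
      moreover have "(y0 * \<kappa> (c-1) + r) mod b = t j" using y0iff[of y0] by simp
      ultimately show False using assms(6)[OF True] by simp
    qed
    have "{1..<b} \<inter> C = {y0}"
    proof (rule set_eqI)
      fix y show "y \<in> {1..<b} \<inter> C \<longleftrightarrow> y \<in> {y0}" using y0iff[of y] Ciff[of y] \<open>y0 \<noteq> 0\<close> by auto
    qed
    then have "measure_pmf.prob (pmf_of_set {1..<b}) C = 1 / real (b - 1)"
      using b2 by (subst measure_pmf_of_set) simp_all
    then show ?thesis unfolding pe C_def[symmetric] using True b2 by (simp add: wt_def of_nat_diff)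
  qed
qed

lemma wt_nonneg: "b \<ge> 2 \<Longrightarrow> wt b c j \<ge> 0"
  by (simp add: wt_def)

lemma peel:
  assumes pr: "prime b" and finA: "finite A" and "finite S" "S \<subseteq> {..<c}" "\<forall>j\<in>S. (c - 1, j) \<notin> A"
    and ka: "0 < \<kappa> (c - 1)" "\<kappa> (c - 1) < b" and tb: "\<forall>j<c. t j < b" and tc: "t (c - 1) \<noteq> 0"
  shows "measure_pmf.prob (Pi_pmf (A \<union> (\<lambda>j. (c - 1, j)) ` S) 0 (pp b)) {f. \<forall>j\<in>S. colC b \<kappa> t c j f}
           = (\<Prod>j\<in>S. wt b c j)"
  using assms(3,4,5)
proof (induction S rule: finite_induct)
  case empty
  have "{f. \<forall>j\<in>{}. colC b \<kappa> t c j f} = UNIV" by simp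
  then show ?case by simp
next
  case (insert j S)
  define x where "x = (c - 1, j)"
  define B where "B = A \<union> (\<lambda>j. (c - 1, j)) ` S"
  define Q where "Q = {f. \<forall>j\<in>S. colC b \<kappa> t c j f}"
  define E where "E = {f. \<forall>j\<in>insert j S. colC b \<kappa> t c j f}"
  have b2: "b \<ge> 2" using pr by (rule prime_ge_2_nat)
  have jc: "j < c" using insert.prems(1) by simp
  have finB: "finite B" unfolding B_def using finA insert.hyps(1) by simp
  have xA: "x \<notin> A" using insert.prems(2) unfolding x_def by simp
  have xS: "x \<notin> (\<lambda>j. (c - 1, j)) ` S" using insert.hyps(2) unfolding x_def by auto
  have xB: "x \<notin> B" unfolding B_def using xA xS by simp
  have set: "A \<union> (\<lambda>j. (c - 1, j)) ` insert j S = insert x B" unfolding B_def x_def by auto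
  have IH: "measure_pmf.prob (Pi_pmf B 0 (pp b)) Q = (\<Prod>j\<in>S. wt b c j)"
    unfolding B_def Q_def using insert.IH insert.prems by simp
  have PI: "Pi_pmf (insert x B) 0 (pp b) = bind_pmf (Pi_pmf B 0 (pp b)) (\<lambda>f. map_pmf (\<lambda>y. f(x := y)) (pp b x))"
    unfolding Pi_pmf_insert'[OF finB xB] map_pmf_def by (rule bind_commute_pmf)
  have pre: "(\<lambda>y. f(x := y)) -` E = (if f \<in> Q then {y. colC b \<kappa> t c j (f(x := y))} else {})" for f
  proof -
    have "colC b \<kappa> t c j' (f(x := y)) = colC b \<kappa> t c j' f" if "j' \<in> S" for j' y
      unfolding x_def by (rule colC_upd_other) (use that insert.hyps(2) in auto)
    then show ?thesis unfolding E_def Q_def by auto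
  qed
  have inner: "emeasure (measure_pmf (map_pmf (\<lambda>y. f(x := y)) (pp b x))) E = ennreal (wt b c j) * indicator Q f" for f
  proof -
    have "emeasure (measure_pmf (map_pmf (\<lambda>y. f(x := y)) (pp b x))) E
          = emeasure (measure_pmf (pp b x)) ((\<lambda>y. f(x := y)) -` E)" by simp
    also have "\<dots> = ennreal (wt b c j) * indicator Q f"
    proof (cases "f \<in> Q")
      case True
      have "measure_pmf.prob (pp b x) {y. colC b \<kappa> t c j (f(x := y))} = wt b c j"
        unfolding x_def by (rule one_col[where \<kappa>=\<kappa> and t=t, OF pr jc ka]) (use tb tc jc in auto)
      then show ?thesis using True unfolding pre by (simp add: measure_pmf.emeasure_eq_measure)
    next
      case False
      then show ?thesis unfolding pre by simp
    qed
    finally show ?thesis .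
  qed
  have "emeasure (measure_pmf (Pi_pmf (insert x B) 0 (pp b))) E
        = (\<integral>\<^sup>+f. ennreal (wt b c j) * indicator Q f \<partial>measure_pmf (Pi_pmf B 0 (pp b)))"
    unfolding PI emeasure_bind_pmf inner ..
  also have "\<dots> = ennreal (wt b c j) * emeasure (measure_pmf (Pi_pmf B 0 (pp b))) Q"
    by (rule nn_integral_cmult_indicator) simp
  also have "\<dots> = ennreal (wt b c j * (\<Prod>j\<in>S. wt b c j))"
  proof -
    have pn: "0 \<le> (\<Prod>j\<in>S. wt b c j)" by (rule prod_nonneg) (use wt_nonneg[OF b2] in auto)
    show ?thesis using IH by (simp add: measure_pmf.emeasure_eq_measure ennreal_mult[OF wt_nonneg[OF b2] pn])
  qed
  finally have "ennreal (measure_pmf.prob (Pi_pmf (insert x B) 0 (pp b)) E) = ennreal (wt b c j * (\<Prod>j\<in>S. wt b c j))"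
    by (simp add: measure_pmf.emeasure_eq_measure)
  then have "measure_pmf.prob (Pi_pmf (insert x B) 0 (pp b)) E = wt b c j * (\<Prod>j\<in>S. wt b c j)"
    using wt_nonneg[OF b2] by (subst (asm) ennreal_inj) (auto intro!: prod_nonneg mult_nonneg_nonneg)
  then show ?case unfolding set E_def using insert.hyps by simp
qed

lemma countable_sets_PiM:
  fixes p :: "'i \<Rightarrow> 'a::countable pmf"
  assumes fin: "finite J" and X: "X \<subseteq> space (Pi\<^sub>M J (\<lambda>i. measure_pmf (p i)))"
  shows "X \<in> sets (Pi\<^sub>M J (\<lambda>i. measure_pmf (p i)))"
proof -
  have sp: "space (Pi\<^sub>M J (\<lambda>i. measure_pmf (p i))) = Pi\<^sub>E J (\<lambda>_. UNIV)" by (simp add: space_PiM)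
  have "countable (Pi\<^sub>E J (\<lambda>_. UNIV :: 'a set))" by (rule countable_PiE[OF fin]) simp
  then have cX: "countable X" using X unfolding sp by (rule countable_subset[rotated])
  have single: "{g} \<in> sets (Pi\<^sub>M J (\<lambda>i. measure_pmf (p i)))" if "g \<in> X" for g
  proof -
    have "g \<in> extensional J" using that X unfolding sp by (auto simp: PiE_def)
    then have "{g} = Pi\<^sub>E J (\<lambda>x. {g x})" by (rule PiE_singleton[symmetric])
    also have "\<dots> \<in> sets (Pi\<^sub>M J (\<lambda>i. measure_pmf (p i)))" by (rule sets_PiM_I_finite[OF fin]) simp
    finally show ?thesis .
  qed
  have "X = (\<Union>g\<in>X. {g})" by simp
  also have "\<dots> \<in> sets (Pi\<^sub>M J (\<lambda>i. measure_pmf (p i)))"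
    by (rule sets.countable_UN''[OF cX single])
  finally show ?thesis .
qed

lemma part1:
  fixes b k :: nat
  assumes pr: "prime b" and k: "k \<ge> 1" and L: "L \<in> L_inf_inf b"
  shows "\<exists>l. (\<forall>j. digit b l j = LTk b L k j) \<and> mu1 b l = mu1 b k"
proof -
  define c where "c = mu1 b k"
  have b2: "b \<ge> 2" using pr by (rule prime_ge_2_nat)
  have c1: "c \<ge> 1" and kc: "digit b k (c - 1) \<noteq> 0" and kz: "\<And>i. i \<ge> c \<Longrightarrow> digit b k i = 0"
    using mu1_props[OF b2 k] unfolding c_def by auto
  have Lz: "\<And>i j. i < j \<Longrightarrow> L (i,j) = 0" and Lb: "\<And>i j. L (i,j) < b" and Ld: "\<And>i. L (i,i) \<noteq> 0"
    using L unfolding L_inf_inf_def by auto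
  define ds where "ds j = LTk b L k j" for j
  have LT: "ds j = (\<Sum>i\<in>{j..<c}. L (i,j) * digit b k i) mod b" for j
    unfolding ds_def by (rule LTk_alt) (use kz Lz in auto)
  have dsb: "ds j < b" for j using b2 unfolding LT by simp
  have dsz: "ds j = 0" if "j \<ge> c" for j using that unfolding LT by simp
  define l where "l = (\<Sum>j<c. ds j * b ^ j)"
  have dl: "digit b l j = ds j" for j
    unfolding l_def digit_sum[of ds b, OF dsb] using dsz[of j] by (cases "j < c") simp_all
  have "ds (c - 1) = (L (c - 1, c - 1) * digit b k (c - 1)) mod b"
  proof -
    have "{c - 1..<c} = {c - 1}" using c1 by auto
    then show ?thesis unfolding LT by simp
  qed
  moreover have "\<not> b dvd (L (c - 1, c - 1) * digit b k (c - 1))"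
  proof
    assume "b dvd (L (c - 1, c - 1) * digit b k (c - 1))"
    then have "b dvd L (c - 1, c - 1) \<or> b dvd digit b k (c - 1)" using pr by (simp add: prime_dvd_mult_iff)
    moreover have "\<not> b dvd L (c - 1, c - 1)"
    proof
      assume "b dvd L (c - 1, c - 1)"
      then have "b \<le> L (c - 1, c - 1)" using Ld[of "c - 1"] by (simp add: dvd_imp_le)
      then show False using Lb[of "c - 1" "c - 1"] by simp
    qed
    moreover have "\<not> b dvd digit b k (c - 1)"
    proof
      assume "b dvd digit b k (c - 1)"
      then have "b \<le> digit b k (c - 1)" using kc by (simp add: dvd_imp_le)
      moreover have "digit b k (c - 1) < b" using b2 unfolding digit_def by simp
      ultimately show False by linarith
    qed
    ultimately show False by simp
  qed
  ultimately have "ds (c - 1) \<noteq> 0" by (simp add: dvd_eq_mod_eq_0)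
  then have "mu1 b l = c" by (intro mu1_char[OF b2 c1]) (simp_all add: dl dsz)
  then show ?thesis using dl unfolding ds_def c_def by auto
qed

lemma part2:
  fixes b k k' n :: nat
  assumes pr: "prime b" and k: "k \<ge> 1" and k': "k' \<ge> 1" and cc: "mu1 b k' = mu1 b k" and nc: "n \<ge> mu1 b k"
  shows "measure (random_L b n) {L \<in> space (random_L b n). \<forall>j<n. LTk b L k j = digit b k' j}
           = 1 / ((real b - 1) * real b ^ (mu1 b k - 1))"
proof -
  define c where "c = mu1 b k"
  have b2: "b \<ge> 2" using pr by (rule prime_ge_2_nat)
  have c1: "c \<ge> 1" and kc: "digit b k (c - 1) \<noteq> 0" and kz: "\<And>i. i \<ge> c \<Longrightarrow> digit b k i = 0"
    using mu1_props[OF b2 k] unfolding c_def by auto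
  have kc': "digit b k' (c - 1) \<noteq> 0" and kz': "\<And>i. i \<ge> c \<Longrightarrow> digit b k' i = 0"
    using mu1_props[OF b2 k'] unfolding c_def cc by auto
  have cn: "c \<le> n" using nc unfolding c_def .
  define I where "I = (UNIV :: nat set) \<times> {..<n}"
  define J where "J = {..<c} \<times> {..<n}"
  define M where "M = (\<lambda>ij::nat\<times>nat. measure_pmf (pp b ij))"
  have RL: "random_L b n = Pi\<^sub>M I M" unfolding random_L_def I_def M_def pp_def ..
  interpret P: product_prob_space M I
    unfolding M_def by (intro product_prob_spaceI measure_pmf.prob_space_axioms)
  define Q where "Q f = (\<forall>j<n. LTk b f k j = digit b k' j)" for f :: "nat \<times> nat \<Rightarrow> nat"
  have finJ: "finite J" unfolding J_def by simp
  have JI: "J \<subseteq> I" unfolding J_def I_def by auto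
  have Qr: "Q (restrict f J) = Q f" for f
  proof -
    have "LTk b (restrict f J) k j = LTk b f k j" if "j < n" for j
      unfolding LTk_def
    proof (intro arg_cong2[where f="(mod)"] sum.cong refl)
      fix i assume "i \<in> {i. digit b k i \<noteq> 0}"
      then have "\<not> i \<ge> c" using kz by auto
      then have "(i,j) \<in> J" unfolding J_def using that by simp
      then show "restrict f J (i, j) * digit b k i = f (i, j) * digit b k i" by simp
    qed
    then show ?thesis unfolding Q_def by simp
  qed
  define X where "X = {g \<in> space (Pi\<^sub>M J M). Q g}"
  have Xs: "X \<in> sets (Pi\<^sub>M J M)" unfolding M_def
    by (rule countable_sets_PiM[OF finJ]) (auto simp: X_def M_def)
  have spJ: "restrict f J \<in> space (Pi\<^sub>M J M)" for f by (simp add: space_PiM M_def)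
  have E: "{L \<in> space (Pi\<^sub>M I M). Q L} = prod_emb I M J X"
    unfolding prod_emb_def X_def using spJ Qr by (auto simp: space_PiM)
  have "measure (Pi\<^sub>M I M) (prod_emb I M J X) = measure (Pi\<^sub>M J M) X"
    unfolding measure_def using P.emeasure_PiM_emb'[OF JI finJ Xs] by simp
  also have "\<dots> = measure (distr (measure_pmf (Pi_pmf J 0 (pp b))) (Pi\<^sub>M J M) (\<lambda>x. restrict x J)) X"
    unfolding M_def distr_Pi_pmf_PiM[OF finJ] ..
  also have "\<dots> = measure_pmf.prob (Pi_pmf J 0 (pp b)) ((\<lambda>x. restrict x J) -` X \<inter> UNIV)"
    by (subst measure_distr) (use Xs spJ in auto)
  also have "(\<lambda>x. restrict x J) -` X \<inter> UNIV = {f. Q f}"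
    unfolding X_def using spJ Qr by auto
  also have "measure_pmf.prob (Pi_pmf J 0 (pp b)) {f. Q f}
           = measure_pmf.prob (Pi_pmf J 0 (pp b)) {f. \<forall>j\<in>{..<c}. colC b (digit b k) (digit b k') c j f}"
  proof (rule measure_eq_AE)
    show "AE f in measure_pmf (Pi_pmf J 0 (pp b)). (f \<in> {f. Q f}) = (f \<in> {f. \<forall>j\<in>{..<c}. colC b (digit b k) (digit b k') c j f})"
    proof (rule AE_pmfI)
      fix f assume f: "f \<in> set_pmf (Pi_pmf J 0 (pp b))"
      then have fz: "f (i,j) = 0" if "i < j" "i < c" "j < n" for i j
      proof -
        have "(i,j) \<in> J" unfolding J_def using that by simp
        then have "f (i,j) \<in> set_pmf (pp b (i,j))" using f unfolding set_Pi_pmf[OF finJ] PiE_dflt_def by auto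
        then show ?thesis using that by (simp add: pp_def entry_pmf_def)
      qed
      have LT: "LTk b f k j = (\<Sum>i\<in>{j..<c}. f (i,j) * digit b k i) mod b" if "j < n" for j
        by (rule LTk_alt) (use kz fz that in auto)
      have "Q f \<longleftrightarrow> (\<forall>j\<in>{..<c}. colC b (digit b k) (digit b k') c j f)"
      proof
        assume "Q f"
        then show "\<forall>j\<in>{..<c}. colC b (digit b k) (digit b k') c j f"
          unfolding Q_def colC_def using LT cn by auto
      next
        assume H: "\<forall>j\<in>{..<c}. colC b (digit b k) (digit b k') c j f"
        show "Q f" unfolding Q_def
        proof (intro allI impI)
          fix j assume jn: "j < n"
          show "LTk b f k j = digit b k' j"
          proof (cases "j < c")
            case True then show ?thesis using H LT[OF jn] unfolding colC_def by auto
          next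
            case False then show ?thesis using LT[OF jn] kz'[of j] by simp
          qed
        qed
      qed
      then show "(f \<in> {f. Q f}) = (f \<in> {f. \<forall>j\<in>{..<c}. colC b (digit b k) (digit b k') c j f})" by simp
    qed
  qed simp_all
  also have "measure_pmf.prob (Pi_pmf J 0 (pp b))
               {f. \<forall>j\<in>{..<c}. colC b (digit b k) (digit b k') c j f} = (\<Prod>j\<in>{..<c}. wt b c j)"
  proof -
    define A where "A = J - (\<lambda>j. (c - 1, j)) ` {..<c}"
    have JA: "J = A \<union> (\<lambda>j. (c - 1, j)) ` {..<c}"
      unfolding A_def J_def using cn c1 by auto
    have "measure_pmf.prob (Pi_pmf (A \<union> (\<lambda>j. (c - 1, j)) ` {..<c}) 0 (pp b))
               {f. \<forall>j\<in>{..<c}. colC b (digit b k) (digit b k') c j f} = (\<Prod>j\<in>{..<c}. wt b c j)"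
    proof (rule peel[OF pr])
      show "0 < digit b k (c - 1)" using kc by simp
      show "digit b k (c - 1) < b" using b2 by (simp add: digit_def)
      show "\<forall>j<c. digit b k' j < b" using b2 by (simp add: digit_def)
      show "finite A" unfolding A_def using finJ by simp
    qed (use kc' in \<open>auto simp: A_def\<close>)
    then show ?thesis unfolding JA[symmetric] .
  qed
  also have "(\<Prod>j\<in>{..<c}. wt b c j) = 1 / ((real b - 1) * real b ^ (c - 1))"
  proof -
    have cs: "c = Suc (c - 1)" using c1 by simp
    have "(\<Prod>j\<in>{..<c}. wt b c j) = (\<Prod>j\<in>{..<c - 1}. wt b c j) * wt b c (c - 1)"
      by (subst cs, subst prod.lessThan_Suc) simp
    also have "(\<Prod>j\<in>{..<c - 1}. wt b c j) = (\<Prod>j\<in>{..<c - 1}. 1 / real b)"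
      by (rule prod.cong) (auto simp: wt_def)
    also have "\<dots> = (1 / real b) ^ (c - 1)" by simp
    finally show ?thesis using b2 by (simp add: wt_def power_one_over)
  qed
  finally show ?thesis unfolding RL E[symmetric] Q_def c_def .
qed

theorem lemma2p13:
  fixes b k :: nat
  assumes "prime b" and "k \<ge> 1"
  defines "c \<equiv> mu1 b k"
  shows "(\<forall>L \<in> L_inf_inf b. \<exists>l. (\<forall>j. digit b l j = LTk b L k j) \<and> mu1 b l = c)
       \<and> (\<forall>k' n. k' \<ge> 1 \<longrightarrow> mu1 b k' = c \<longrightarrow> n \<ge> c \<longrightarrow>
            measure (random_L b n) {L \<in> space (random_L b n). \<forall>j<n. LTk b L k j = digit b k' j}
              = 1 / ((real b - 1) * real b ^ (c - 1)))"
  unfolding c_def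
proof (intro conjI ballI allI impI)
  fix L assume "L \<in> L_inf_inf b"
  then show "\<exists>l. (\<forall>j. digit b l j = LTk b L k j) \<and> mu1 b l = mu1 b k"
    by (rule part1[OF assms(1,2)])
next
  fix k' n :: nat assume "k' \<ge> 1" "mu1 b k' = mu1 b k" "n \<ge> mu1 b k"
  then show "measure (random_L b n) {L \<in> space (random_L b n). \<forall>j<n. LTk b L k j = digit b k' j}
              = 1 / ((real b - 1) * real b ^ (mu1 b k - 1))"
    by (rule part2[OF assms(1,2)])
qed

end
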